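(* Let $p\ge 2$, $n\ge 1$, and let $X^{(1)},\dots,X^{(n)}\in\mathbb{R}^p$ be observations. Suppose $\{1,\dots,n\}=G\sqcup B$, where the observations $X^{(i)}$, $i\in G$, are i.i.d. $N(0,\Sigma^* )$ with $\Sigma^*=(\Theta^* )^{-1}$ for a symmetric positive definite $\Theta^*\in\mathbb{R}^{p\times p}$ having at most $k$ nonzero off-diagonal entries, and the observations $X^{(i)}$, $i\in B$, are arbitrary. Let $h:=|G|$, and let $R>0$ with $\|\Theta^*\|_1\le R$. Let $(\widetilde\Theta,\widetilde w)$ be any local optimum of the Trimmed Graphical Lasso problem (defined in the context) with parameters $h,R,\lambda$, and define $w^*\in\mathbb{R}^n$ by $w^*_i=\widetilde w_i$ for $i\in G$ and $w^*_i=0$ for $i\in B$. Put $\widetilde\Delta:=\widetilde\Theta-\Theta^*$ and $\widetilde\Gamma:=\widetilde w-w^*$. Assume: (i) (restricted strong convexity) there is $\kappa_l>0$ such that for every $\Delta\in\mathbb{R}^{p\times p}$ with $\|\Delta\|_F\le 1$ and $\Theta^*+\Delta$ positive definite, $$\langle\langle (\Theta^* )^{-1}-(\Theta^*+\Delta)^{-1},\Delta\rangle\rangle\ge\kappa_l\|\Delta\|_F^2;$$ (ii) (incoherence) there are nonnegative numbers $\tau_1(n,p),\tau_2(n,p)$ such that $$\Big|\Big\langle\Big\langle \frac1h\sum_{i=1}^n\widetilde\Gamma_i X^{(i)}(X^{(i)})^\top,\widetilde\Delta\Big\rangle\Big\rangle\Big|\le\tau_1(n,p)\|\widetilde\Delta\|_F+\tau_2(n,p)\|\widetilde\Delta\|_1;$$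 (iii) the regularization parameter satisfies $$4\max\Big\{\Big\|\frac1h\sum_{i=1}^n w^*_iX^{(i)}(X^{(i)})^\top-(\Theta^* )^{-1}\Big\|_\infty,\ \tau_2(n,p)\Big\}\le\lambda\le\frac{\kappa_l-\tau_1(n,p)}{3R}.$$ Then $$\|\widetilde\Theta-\Theta^*\|_F\le\frac{1}{\kappa_l}\Big(\frac{3\lambda\sqrt{k+p}}{2}+\tau_1(n,p)\Big)$$ and $$\|\widetilde\Theta-\Theta^*\|_{1,\mathrm{off}}\le\frac{2}{\lambda\kappa_l}\Big(3\lambda\sqrt{k+p}+\tau_1(n,p)\Big)^2.$$
   Context: Notation: for $U,V\in\mathbb{R}^{p\times p}$, $\langle\langle U,V\rangle\rangle=\mathrm{tr}(UV^\top)$; $\|U\|_1=\sum_{i,j}|U_{ij}|$ and $\|U\|_\infty=\max_{i,j}|U_{ij}|$ (element-wise norms, diagonal included); $\|U\|_{1,\mathrm{off}}=\sum_{i\ne j}|U_{ij}|$; $\|U\|_F$ is the Frobenius norm. Trimmed Graphical Lasso problem with parameters $h\in(0,n]$, $R>0$, $\lambda>0$: $$\min_{\Theta,w}\ \Big\langle\Big\langle\Theta,\frac1h\sum_{i=1}^n w_iX^{(i)}(X^{(i)})^\top\Big\rangle\Big\rangle-\log\det\Theta+\lambda\|\Theta\|_{1,\mathrm{off}}$$ subject to $\Theta$ symmetric positive definite, $w\in[0,1]^n$, $\mathbf 1^\top w=h$, $\|\Theta\|_1\le R$. A local optimum is a feasible pair $(\widetilde\Theta,\widetilde w)$ that is a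 local minimizer of this problem; in particular $\widetilde\Theta$ minimizes the objective over the feasible $\Theta$ with $w$ fixed at $\widetilde w$. *)

theory Defs
  imports "HOL-Analysis.Analysis"
begin

type_synonym 'p sqmat = "real^'p^'p"

definition mat_inner :: "'p::finite sqmat \<Rightarrow> 'p sqmat \<Rightarrow> real" where
  "mat_inner U V = trace (U ** transpose V)"

definition l1_norm :: "'p::finite sqmat \<Rightarrow> real" where
  "l1_norm U = (\<Sum>i\<in>UNIV. \<Sum>j\<in>UNIV. \<bar>U$i$j\<bar>)"

definition linf_norm :: "'p::finite sqmat \<Rightarrow> real" where
  "linf_norm U = Max {\<bar>U$i$j\<bar> | i j. True}"

definition l1_off_norm :: "'p::finite sqmat \<Rightarrow> real" where
  "l1_off_norm U = (\<Sum>i\<in>UNIV. \<Sum>j\<in>UNIV. if i \<noteq> j then \<bar>U$i$j\<bar> else 0)"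

definition frob_norm :: "'p::finite sqmat \<Rightarrow> real" where
  "frob_norm U = sqrt (\<Sum>i\<in>UNIV. \<Sum>j\<in>UNIV. (U$i$j)\<^sup>2)"

definition symmetric_mat :: "'p::finite sqmat \<Rightarrow> bool" where
  "symmetric_mat A \<longleftrightarrow> transpose A = A"

definition pos_def :: "'p::finite sqmat \<Rightarrow> bool" where
  "pos_def A \<longleftrightarrow> symmetric_mat A \<and> (\<forall>x. x \<noteq> 0 \<longrightarrow> x \<bullet> (A *v x) > 0)"

definition outer :: "real^'p \<Rightarrow> real^'p^'p" where
  "outer x = (\<chi> i j. x$i * x$j)"

definition wcov :: "real \<Rightarrow> ('n::finite \<Rightarrow> real^'p::finite) \<Rightarrow> real^'n \<Rightarrow> 'p sqmat" where
  "wcov h X w = (1 / h) *\<^sub>R (\<Sum>i\<in>UNIV. (w$i) *\<^sub>R outer (X i))"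

definition tgl_objective ::
  "real \<Rightarrow> real \<Rightarrow> ('n::finite \<Rightarrow> real^'p::finite) \<Rightarrow> 'p sqmat \<Rightarrow> real^'n \<Rightarrow> real" where
  "tgl_objective h lam X Theta w =
     mat_inner Theta (wcov h X w) - ln (det Theta) + lam * l1_off_norm Theta"

definition tgl_feasible ::
  "real \<Rightarrow> real \<Rightarrow> 'p::finite sqmat \<Rightarrow> real^'n::finite \<Rightarrow> bool" where
  "tgl_feasible h R Theta w \<longleftrightarrow>
     symmetric_mat Theta \<and> pos_def Theta \<and> (\<forall>i. 0 \<le> w$i \<and> w$i \<le> 1) \<and>
     (\<Sum>i\<in>UNIV. w$i) = h \<and> l1_norm Theta \<le> R"

definition tgl_local_opt ::
  "real \<Rightarrow> real \<Rightarrow> real \<Rightarrow> ('n::finite \<Rightarrow> real^'p::finite) \<Rightarrow> 'p sqmat \<Rightarrow> real^'n \<Rightarrow> bool" where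
  "tgl_local_opt h R lam X Theta w \<longleftrightarrow>
     tgl_feasible h R Theta w \<and>
     (\<exists>e>0. \<forall>Theta' w'. tgl_feasible h R Theta' w' \<and> dist (Theta', w') (Theta, w) < e \<longrightarrow>
        tgl_objective h lam X Theta w \<le> tgl_objective h lam X Theta' w')"

end

theory Submission
  imports Defs
begin


definition quad :: "'p::finite sqmat \<Rightarrow> real^'p \<Rightarrow> real^'p \<Rightarrow> real" where
  "quad A x y = (\<Sum>i\<in>UNIV. \<Sum>j\<in>UNIV. x$i * A$i$j * y$j)"

definition psd :: "'p::finite sqmat \<Rightarrow> bool" where
  "psd A \<longleftrightarrow> (\<forall>i j. A$i$j = A$j$i) \<and> (\<forall>x. 0 \<le> quad A x x)"

lemma inner_mulv: "x \<bullet> ((A::'p::finite sqmat) *v y) = quad A x y"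
  by (simp add: quad_def inner_vec_def matrix_vector_mult_def sum_distrib_left mult.assoc)

lemma mat_inner_alt: "mat_inner U V = (\<Sum>i\<in>UNIV. \<Sum>j\<in>UNIV. U$i$j * V$i$j)"
  by (simp add: mat_inner_def trace_def matrix_matrix_mult_def transpose_def)

lemma symmetric_mat_iff: "symmetric_mat A \<longleftrightarrow> (\<forall>i j. A$i$j = A$j$i)"
  unfolding symmetric_mat_def transpose_def vec_eq_iff by auto

lemma quad_sym: assumes "\<forall>i j. A$i$j = A$j$i" shows "quad A x y = quad A y x"
  unfolding quad_def
  apply (subst sum.swap)
  using assms by (simp add: mult_ac)

lemma quad_add_scale:
  "quad A (x + t *\<^sub>R y) (x + t *\<^sub>R y) = quad A x x + t * quad A x y + t * quad A y x + t^2 * quad A y y"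
  unfolding quad_def
  by (simp add: algebra_simps sum.distrib sum_distrib_left power2_eq_square)

lemma discr:
  fixes a b c :: real
  assumes "\<forall>t. 0 \<le> a + 2*b*t + c*t^2" "0 \<le> c"
  shows "b^2 \<le> a*c"
proof (cases "c = 0")
  case True
  have "b = 0"
  proof (rule ccontr)
    assume "b \<noteq> 0"
    have "0 \<le> a + 2*b*(-(a+1)/(2*b)) + c*(-(a+1)/(2*b))^2" using assms(1) by blast
    then show False using \<open>b\<noteq>0\<close> True by (simp add: field_simps)
  qed
  then show ?thesis using True by simp
next
  case False
  then have c: "c > 0" using assms(2) by simp
  have "0 \<le> a + 2*b*(-b/c) + c*(-b/c)^2" using assms(1) by blast
  also have "\<dots> = a - b^2/c" using c by (simp add: field_simps power2_eq_square)
  finally show ?thesis using c by (simp add: field_simps)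
qed

lemma psd_cs:
  assumes "psd A"
  shows "(quad A x y)^2 \<le> quad A x x * quad A y y"
proof -
  have s: "\<forall>i j. A$i$j = A$j$i" and p: "\<And>z. 0 \<le> quad A z z" using assms unfolding psd_def by auto
  have "\<forall>t. 0 \<le> quad A x x + 2*quad A x y*t + quad A y y*t^2"
  proof
    fix t
    have "0 \<le> quad A (x + t *\<^sub>R y) (x + t *\<^sub>R y)" by (rule p)
    then show "0 \<le> quad A x x + 2*quad A x y*t + quad A y y*t^2"
      unfolding quad_add_scale quad_sym[OF s, of y x] by (simp add: algebra_simps)
  qed
  then show ?thesis using discr p[of y] by blast
qed


lemma sum_delta_mult: "(\<Sum>i\<in>UNIV. (if i = a then (1::real) else 0) * f i) = f (a::'a::finite)"
  by (simp add: if_distrib[of "\<lambda>c. c * f _"] cong: if_cong)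
lemma quad_axis_right: "quad A x (axis a 1) = (\<Sum>i\<in>UNIV. x$i * A$i$a)"
  by (simp add: quad_def axis_def mult.commute[of _ "if _ then _ else _"] sum_delta_mult)
lemma quad_axis_both: "quad A (axis a 1) (axis b 1) = A$a$b"
  unfolding quad_axis_right by (simp add: axis_def sum_delta_mult)


lemma psd_diag_zero:
  assumes "psd A" "A$a$a = 0"
  shows "A$a$j = 0"
proof -
  let ?x = "axis a (1::real)" and ?y = "axis j (1::real)"
  have qa: "quad A ?x ?y = A$a$j" and qb: "quad A ?x ?x = A$a$a"
    by (simp_all add: quad_axis_both)
  have "(quad A ?x ?y)^2 \<le> quad A ?x ?x * quad A ?y ?y" by (rule psd_cs[OF assms(1)])
  then show ?thesis using qa qb assms(2) by simp
qed


lemma psd_pair_nonneg_aux: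
  assumes "finite S" "psd Q"
  shows "\<forall>P. psd P \<and> (\<forall>i j. i \<notin> S \<longrightarrow> P$i$j = 0) \<longrightarrow> 0 \<le> (\<Sum>i\<in>UNIV. \<Sum>j\<in>UNIV. P$i$j * Q$i$j)"
  using assms(1)
proof (induction S rule: finite_induct)
  case empty
  then show ?case by simp
next
  case (insert a S)
  show ?case
  proof (intro allI impI)
    fix P :: "'a sqmat"
    assume H: "psd P \<and> (\<forall>i j. i \<notin> insert a S \<longrightarrow> P$i$j = 0)"
    have Ps: "\<forall>i j. P$i$j = P$j$i" using H unfolding psd_def by auto
    show "0 \<le> (\<Sum>i\<in>UNIV. \<Sum>j\<in>UNIV. P$i$j * Q$i$j)"
    proof (cases "P$a$a = 0")
      case True
      have "\<forall>i j. i \<notin> S \<longrightarrow> P$i$j = 0"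
        using H psd_diag_zero[OF _ True] by (metis insertE)
      then show ?thesis using insert.IH H by blast
    next
      case False
      have paa: "P$a$a > 0"
      proof -
        have "0 \<le> quad P (axis a 1) (axis a 1)" using H unfolding psd_def by blast
        then show ?thesis using False by (simp add: quad_axis_both)
      qed
      define u :: "real^'a" where "u = (\<chi> i. P$i$a / sqrt (P$a$a))"
      define P' :: "'a sqmat" where "P' = (\<chi> i j. P$i$j - u$i * u$j)"
      have uu: "u$i * u$j = P$i$a * P$j$a / P$a$a" for i j
        using paa by (simp add: u_def field_simps real_sqrt_mult[symmetric])
      have P's: "\<forall>i j. P'$i$j = P'$j$i" using Ps by (simp add: P'_def mult.commute)
      have qP': "quad P' x x = quad P x x - (quad P x (axis a 1))^2 / P$a$a" for x
      proof -
        have "quad P' x x = quad P x x - (\<Sum>i\<in>UNIV. \<Sum>j\<in>UNIV. x$i * (u$i * u$j) * x$j)"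
          by (simp add: quad_def P'_def algebra_simps sum_subtractf)
        also have "(\<Sum>i\<in>UNIV. \<Sum>j\<in>UNIV. x$i * (u$i * u$j) * x$j) = (\<Sum>i\<in>UNIV. x$i * u$i)^2"
          by (simp add: power2_eq_square sum_product mult_ac)
        also have "(\<Sum>i\<in>UNIV. x$i * u$i) = quad P x (axis a 1) / sqrt (P$a$a)"
          by (simp add: quad_axis_right u_def sum_divide_distrib)
        finally show ?thesis using paa by (simp add: power_divide)
      qed
      have psdP': "psd P'"
        unfolding psd_def
      proof (intro conjI allI)
        fix x
        have "(quad P x (axis a 1))^2 \<le> quad P x x * quad P (axis a 1) (axis a 1)"
          using psd_cs H by blast
        moreover have "quad P (axis a 1) (axis a 1) = P$a$a"
          by (simp add: quad_axis_both)
        ultimately have "(quad P x (axis a 1))^2 / P$a$a \<le> quad P x x"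
          using paa by (simp add: divide_le_eq)
        then show "0 \<le> quad P' x x" using qP' by simp
      qed (use P's in auto)
      have supp: "\<forall>i j. i \<notin> S \<longrightarrow> P'$i$j = 0"
      proof (intro allI impI)
        fix i j assume "i \<notin> S"
        show "P'$i$j = 0"
        proof (cases "i = a")
          case True
          then show ?thesis using paa Ps by (simp add: P'_def uu)
        next
          case False
          then have "P$i$j = 0" "P$i$a = 0" using H \<open>i\<notin>S\<close> by auto
          then show ?thesis by (simp add: P'_def u_def)
        qed
      qed
      have ih: "0 \<le> (\<Sum>i\<in>UNIV. \<Sum>j\<in>UNIV. P'$i$j * Q$i$j)" using insert.IH psdP' supp by blast
      have q: "0 \<le> quad Q u u" using assms(2) unfolding psd_def by blast
      have "(\<Sum>i\<in>UNIV. \<Sum>j\<in>UNIV. P$i$j * Q$i$j) = (\<Sum>i\<in>UNIV. \<Sum>j\<in>UNIV. P'$i$j * Q$i$j) + quad Q u u"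
        by (simp add: P'_def quad_def algebra_simps sum.distrib[symmetric])
      then show ?thesis using ih q by simp
    qed
  qed
qed

lemma psd_pair_nonneg:
  assumes "psd P" "psd Q"
  shows "0 \<le> (\<Sum>i\<in>UNIV. \<Sum>j\<in>UNIV. P$i$j * Q$i$j)"
  using psd_pair_nonneg_aux[OF finite assms(2)] assms(1) by blast



lemma msub_ldistrib: "(A::'p::finite sqmat) ** (B - C) = A ** B - A ** C"
  by (simp add: matrix_matrix_mult_def vec_eq_iff sum_subtractf algebra_simps)
lemma msub_rdistrib: "((B::'p::finite sqmat) - C) ** A = B ** A - C ** A"
  by (simp add: matrix_matrix_mult_def vec_eq_iff sum_subtractf algebra_simps)

lemma pd_psd: "pos_def A \<Longrightarrow> psd A"
  unfolding pos_def_def psd_def symmetric_mat_iff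
proof (intro conjI allI, simp)
  fix x assume H: "(\<forall>i j. A $ i $ j = A $ j $ i) \<and> (\<forall>x. x \<noteq> 0 \<longrightarrow> 0 < x \<bullet> (A *v x))"
  show "0 \<le> quad A x x"
  proof (cases "x = 0")
    case True then show ?thesis by (simp add: quad_def)
  next
    case False then show ?thesis using H inner_mulv[of x A x] by (metis less_imp_le)
  qed
qed

lemma sym_transpose: "(\<forall>i j. A$i$j = A$j$i) \<longleftrightarrow> transpose A = A"
  unfolding transpose_def vec_eq_iff by auto

lemma inner_sym_move:
  fixes D :: "'p::finite sqmat"
  assumes "\<forall>i j. D$i$j = D$j$i"
  shows "x \<bullet> (D *v z) = (D *v x) \<bullet> z"
proof -
  have "x \<bullet> (D *v z) = (x v* D) \<bullet> z" by (simp add: dot_lmul_matrix)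
  also have "x v* D = D *v x" using assms sym_transpose vector_transpose_matrix by metis
  finally show ?thesis .
qed

lemma pd_sym: "pos_def A \<Longrightarrow> \<forall>i j. A$i$j = A$j$i"
  unfolding pos_def_def symmetric_mat_iff by simp

lemma pd_invertible:
  fixes A :: "'p::finite sqmat"
  assumes "pos_def A" shows "invertible A"
proof -
  have "\<forall>x. A *v x = 0 \<longrightarrow> x = 0"
    using assms unfolding pos_def_def by (metis inner_zero_right less_irrefl)
  then show ?thesis using matrix_left_invertible_ker invertible_left_inverse by blast
qed

lemma inv_props:
  fixes A :: "'p::finite sqmat"
  assumes "invertible A"
  shows "A ** matrix_inv A = mat 1" "matrix_inv A ** A = mat 1"
proof -
  have "\<exists>A'. A ** A' = mat 1 \<and> A' ** A = mat 1" using assms unfolding invertible_def by blast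
  then have "A ** matrix_inv A = mat 1 \<and> matrix_inv A ** A = mat 1"
    unfolding matrix_inv_def by (rule someI_ex)
  then show "A ** matrix_inv A = mat 1" "matrix_inv A ** A = mat 1" by auto
qed

lemma inv_unique:
  fixes A B :: "'p::finite sqmat"
  assumes "invertible A" "B ** A = mat 1"
  shows "B = matrix_inv A"
proof -
  have "B = B ** (A ** matrix_inv A)" using inv_props(1)[OF assms(1)] by simp
  also have "\<dots> = matrix_inv A" by (metis matrix_mul_assoc assms(2) matrix_mul_lid)
  finally show ?thesis .
qed

lemma inv_sym:
  fixes A :: "'p::finite sqmat"
  assumes "pos_def A" shows "transpose (matrix_inv A) = matrix_inv A"
proof -
  have i: "invertible A" by (rule pd_invertible[OF assms])
  have tA: "transpose A = A" using assms unfolding pos_def_def symmetric_mat_def by simp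
  have "transpose (matrix_inv A) ** A = mat 1"
    using inv_props(1)[OF i] by (metis matrix_transpose_mul tA transpose_mat)
  then show ?thesis using inv_unique[OF i] by blast
qed

lemma inv_psd:
  fixes A :: "'p::finite sqmat"
  assumes "pos_def A" shows "psd (matrix_inv A)"
  unfolding psd_def
proof (intro conjI allI)
  have i: "invertible A" by (rule pd_invertible[OF assms])
  fix x :: "real^'p"
  define y where "y = matrix_inv A *v x"
  have xy: "x = A *v y" unfolding y_def by (simp add: matrix_vector_mul_assoc inv_props[OF i])
  have "quad (matrix_inv A) x x = x \<bullet> y" by (simp add: inner_mulv[symmetric] y_def)
  also have "\<dots> = y \<bullet> (A *v y)" using xy by (simp add: inner_commute)
  finally show "0 \<le> quad (matrix_inv A) x x"
    using assms unfolding pos_def_def by (metis inner_zero_left less_eq_real_def order_refl)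
next
  fix i j
  show "matrix_inv A $ i $ j = matrix_inv A $ j $ i"
    using inv_sym[OF assms] sym_transpose by metis
qed

lemma dpd_psd:
  fixes D P :: "'p::finite sqmat"
  assumes "\<forall>i j. D$i$j = D$j$i" "psd P"
  shows "psd (D ** P ** D)"
  unfolding psd_def
proof (intro conjI allI)
  fix x :: "real^'p"
  have "quad (D ** P ** D) x x = x \<bullet> (D *v (P *v (D *v x)))"
    by (simp add: inner_mulv[symmetric] matrix_vector_mul_assoc matrix_mul_assoc)
  also have "\<dots> = (D *v x) \<bullet> (P *v (D *v x))" by (rule inner_sym_move[OF assms(1)])
  also have "\<dots> = quad P (D *v x) (D *v x)" by (simp add: inner_mulv)
  finally show "0 \<le> quad (D ** P ** D) x x" using assms(2) unfolding psd_def by simp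
next
  have tD: "transpose D = D" using assms(1) sym_transpose by blast
  have tP: "transpose P = P" using assms(2) sym_transpose unfolding psd_def by blast
  have "transpose (D ** P ** D) = D ** P ** D"
    by (simp add: matrix_transpose_mul tD tP matrix_mul_assoc)
  then show "\<And>i j. (D ** P ** D) $ i $ j = (D ** P ** D) $ j $ i" using sym_transpose by metis
qed

lemma trace_pair:
  fixes P Q :: "'p::finite sqmat"
  assumes "\<forall>i j. Q$i$j = Q$j$i"
  shows "trace (P ** Q) = (\<Sum>i\<in>UNIV. \<Sum>j\<in>UNIV. P$i$j * Q$i$j)"
  unfolding trace_def matrix_matrix_mult_def using assms by simp

lemma mono_inv:
  fixes A1 A2 :: "'p::finite sqmat"
  assumes "pos_def A1" "pos_def A2"
  shows "0 \<le> mat_inner (matrix_inv A1 - matrix_inv A2) (A2 - A1)"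
proof -
  have i1: "invertible A1" and i2: "invertible A2" using assms pd_invertible by auto
  define D where "D = A2 - A1"
  define P1 where "P1 = matrix_inv A1"
  define P2 where "P2 = matrix_inv A2"
  have Ds: "\<forall>i j. D$i$j = D$j$i" using pd_sym[OF assms(1)] pd_sym[OF assms(2)] unfolding D_def by simp
  have eq: "P1 - P2 = P1 ** D ** P2"
  proof -
    have a: "P1 ** A2 ** P2 = P1" using inv_props(1)[OF i2]
      by (metis P2_def matrix_mul_assoc matrix_mul_rid)
    have b: "P1 ** A1 ** P2 = P2" using inv_props(2)[OF i1]
      by (metis P1_def matrix_mul_lid)
    show ?thesis unfolding D_def msub_ldistrib msub_rdistrib a b ..
  qed
  have Q: "psd (D ** P2 ** D)" using dpd_psd[OF Ds inv_psd[OF assms(2)]] by (simp add: P2_def)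
  have tD: "transpose D = D" using Ds sym_transpose by blast
  have "mat_inner (P1 ** D ** P2) D = trace (P1 ** (D ** P2 ** D))"
    unfolding mat_inner_def tD by (simp add: matrix_mul_assoc)
  also have "\<dots> = (\<Sum>i\<in>UNIV. \<Sum>j\<in>UNIV. P1$i$j * (D ** P2 ** D)$i$j)"
    by (rule trace_pair) (use Q in \<open>simp add: psd_def\<close>)
  also have "\<dots> \<ge> 0" using psd_pair_nonneg[OF inv_psd[OF assms(1)] Q] by (simp add: P1_def)
  finally show ?thesis using eq by (simp add: P1_def P2_def D_def)
qed



lemma det_expand:
  "det (mat 1 + t *\<^sub>R (M::'p::finite sqmat)) =
   (\<Sum>p\<in>{p. p permutes (UNIV::'p set)}. of_int (sign p) *
      (\<Prod>i\<in>UNIV. (if i = p i then 1 else 0) + t * M$i$(p i)))"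
  unfolding det_def by (simp add: mat_def)

lemma perm_not_id_prod:
  assumes "p permutes (UNIV::'p::finite set)" "p \<noteq> id"
  shows "(\<Prod>j\<in>UNIV-{i}. (if j = p j then (1::real) else 0)) = 0"
proof -
  obtain m where m: "p m \<noteq> m" using assms(2) by (metis eq_id_iff)
  have "\<exists>j. j \<noteq> i \<and> p j \<noteq> j"
  proof (cases "m = i")
    case False then show ?thesis using m by blast
  next
    case True
    have "p (p i) \<noteq> p i"
    proof
      assume "p (p i) = p i"
      then have "p i = i" using permutes_inj[OF assms(1)] by (meson injD)
      then show False using m True by simp
    qed
    then show ?thesis using m True by metis
  qed
  then obtain j where "j \<noteq> i" "p j \<noteq> j" by blast
  then show ?thesis by (intro prod_zero bexI[of _ j]) auto
qed

lemma jacobi_id: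
  "((\<lambda>t. det (mat 1 + t *\<^sub>R (M::'p::finite sqmat))) has_field_derivative trace M) (at 0)"
proof -
  let ?P = "{p. p permutes (UNIV::'p set)}"
  let ?f = "\<lambda>p i t. (if i = p i then 1 else 0) + t * M$i$(p i)"
  have d: "((\<lambda>t. \<Sum>p\<in>?P. of_int (sign p) * (\<Prod>i\<in>UNIV. ?f p i t)) has_field_derivative
      (\<Sum>p\<in>?P. of_int (sign p) * (\<Sum>i\<in>UNIV. M$i$(p i) * (\<Prod>j\<in>UNIV-{i}. ?f p j 0)))) (at 0)"
    apply (intro DERIV_sum DERIV_cmult)
    apply (rule has_field_derivative_prod)
    apply (auto intro!: derivative_eq_intros)
    done
  have inner: "(\<Sum>i\<in>UNIV. M$i$(p i) * (\<Prod>j\<in>UNIV-{i}. ?f p j 0)) = (if p = id then trace M else 0)"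
    if "p \<in> ?P" for p
  proof (cases "p = id")
    case True then show ?thesis by (simp add: trace_def)
  next
    case False
    have "M$i$(p i) * (\<Prod>j\<in>UNIV-{i}. ?f p j 0) = 0" for i
    proof -
      have "(\<Prod>j\<in>UNIV-{i}. ?f p j 0) = (\<Prod>j\<in>UNIV-{i}. if j = p j then 1 else 0)" by simp
      also have "\<dots> = 0" using perm_not_id_prod[of p i] that False by simp
      finally show ?thesis by simp
    qed
    then have "(\<Sum>i\<in>UNIV. M$i$(p i) * (\<Prod>j\<in>UNIV-{i}. ?f p j 0)) = 0"
      by (intro sum.neutral) blast
    then show ?thesis using False by simp
  qed
  have "(\<Sum>p\<in>?P. of_int (sign p) * (\<Sum>i\<in>UNIV. M$i$(p i) * (\<Prod>j\<in>UNIV-{i}. ?f p j 0)))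
       = (\<Sum>p\<in>?P. if p = id then trace M else 0)"
  proof (rule sum.cong[OF refl])
    fix p assume "p \<in> ?P"
    from inner[OF this] show "of_int (sign p) * (\<Sum>i\<in>UNIV. M$i$(p i) * (\<Prod>j\<in>UNIV-{i}. ?f p j 0))
       = (if p = id then trace M else 0)"
      by (cases "p = id") (simp_all add: sign_id)
  qed
  also have "\<dots> = trace M" by (simp add: sum.delta'[OF finite_permutations] permutes_id)
  finally show ?thesis using d unfolding det_expand by simp
qed

lemma jacobi:
  fixes A E :: "'p::finite sqmat"
  assumes "invertible A"
  shows "((\<lambda>t. det (A + t *\<^sub>R E)) has_field_derivative det A * trace (matrix_inv A ** E)) (at 0)"
proof -
  have eq: "A + t *\<^sub>R E = A ** (mat 1 + t *\<^sub>R (matrix_inv A ** E))" for t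
    by (simp add: matrix_add_ldistrib matrix_scalar_ac scalar_matrix_assoc[symmetric]
        matrix_mul_assoc inv_props[OF assms])
  show ?thesis unfolding eq det_mul by (intro DERIV_cmult jacobi_id)
qed

lemma det_pd_pos:
  fixes A :: "'p::finite sqmat"
  assumes "pos_def A" shows "det A > 0"
proof (rule ccontr)
  assume "\<not> det A > 0"
  define M where "M t = (1 - t) *\<^sub>R mat 1 + t *\<^sub>R A" for t :: real
  have cont: "continuous_on {0..1} (\<lambda>t. det (M t))"
    unfolding M_def det_def by (simp add: mat_def) (intro continuous_intros)
  obtain t where t: "0 \<le> t" "t \<le> 1" "det (M t) = 0"
    using IVT2'[of "\<lambda>t. det (M t)" 1 0 0, OF _ _ _ cont] \<open>\<not> det A > 0\<close>
    by (auto simp: M_def)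
  have "pos_def (M t)"
    unfolding pos_def_def symmetric_mat_iff
  proof (intro conjI allI impI)
    fix i j show "M t $ i $ j = M t $ j $ i" using pd_sym[OF assms] by (simp add: M_def mat_def)
  next
    fix x :: "real^'p" assume "x \<noteq> 0"
    have "quad (M t) x x = (1 - t) * quad (mat 1) x x + t * quad A x x"
      by (simp add: quad_def M_def algebra_simps sum.distrib sum_distrib_left sum_subtractf)
    then have "x \<bullet> (M t *v x) = (1 - t) * (x \<bullet> x) + t * (x \<bullet> (A *v x))"
      by (simp add: inner_mulv[symmetric])
    moreover have "x \<bullet> x > 0" using \<open>x \<noteq> 0\<close> by simp
    moreover have "x \<bullet> (A *v x) > 0" using assms \<open>x \<noteq> 0\<close> unfolding pos_def_def by blast
    ultimately show "0 < x \<bullet> (M t *v x)" using t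
      by (cases "t = 0") (auto intro: add_nonneg_pos add_pos_nonneg)
  qed
  then have "det (M t) \<noteq> 0" using pd_invertible invertible_det_nz by blast
  then show False using t by simp
qed



lemma abs_convex: "0 \<le> t \<Longrightarrow> t \<le> 1 \<Longrightarrow> \<bar>(a::real) + t * (b - a)\<bar> \<le> (1 - t) * \<bar>a\<bar> + t * \<bar>b\<bar>"
proof -
  assume t: "0 \<le> t" "t \<le> 1"
  have "a + t * (b - a) = (1 - t) * a + t * b" by (simp add: algebra_simps)
  also have "\<bar>\<dots>\<bar> \<le> \<bar>(1 - t) * a\<bar> + \<bar>t * b\<bar>" by (rule abs_triangle_ineq)
  also have "\<dots> = (1 - t) * \<bar>a\<bar> + t * \<bar>b\<bar>" using t by (simp add: abs_mult)
  finally show ?thesis .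
qed

lemma l1_convex:
  assumes "0 \<le> t" "t \<le> 1"
  shows "l1_norm (T + t *\<^sub>R (S - T)) \<le> (1 - t) * l1_norm T + t * l1_norm S"
proof -
  have "l1_norm (T + t *\<^sub>R (S - T)) \<le> (\<Sum>i\<in>UNIV. \<Sum>j\<in>UNIV. (1 - t) * \<bar>T$i$j\<bar> + t * \<bar>S$i$j\<bar>)"
    unfolding l1_norm_def by (intro sum_mono) (simp add: abs_convex assms)
  also have "\<dots> = (1 - t) * l1_norm T + t * l1_norm S"
    by (simp add: l1_norm_def sum.distrib sum_distrib_left)
  finally show ?thesis .
qed

lemma off_convex:
  assumes "0 \<le> t" "t \<le> 1"
  shows "l1_off_norm (T + t *\<^sub>R (S - T)) \<le> (1 - t) * l1_off_norm T + t * l1_off_norm S"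
proof -
  have "l1_off_norm (T + t *\<^sub>R (S - T)) \<le> (\<Sum>i\<in>UNIV. \<Sum>j\<in>UNIV. (1 - t) * (if i \<noteq> j then \<bar>T$i$j\<bar> else 0) + t * (if i \<noteq> j then \<bar>S$i$j\<bar> else 0))"
    unfolding l1_off_norm_def by (intro sum_mono) (simp add: abs_convex assms)
  also have "\<dots> = (1 - t) * l1_off_norm T + t * l1_off_norm S"
    by (simp add: l1_off_norm_def sum.distrib sum_distrib_left)
  finally show ?thesis .
qed

lemma pd_convex:
  assumes "pos_def T" "pos_def S" "0 \<le> t" "t \<le> 1"
  shows "pos_def (T + t *\<^sub>R (S - T))"
  unfolding pos_def_def symmetric_mat_iff
proof (intro conjI allI impI)
  fix i j show "(T + t *\<^sub>R (S - T)) $ i $ j = (T + t *\<^sub>R (S - T)) $ j $ i"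
    using pd_sym[OF assms(1)] pd_sym[OF assms(2)] by simp
next
  fix x :: "real^'a" assume "x \<noteq> 0"
  have q: "quad (T + t *\<^sub>R (S - T)) x x = (1 - t) * quad T x x + t * quad S x x"
    by (simp add: quad_def algebra_simps sum.distrib sum_distrib_left sum_subtractf)
  have a: "quad T x x > 0" "quad S x x > 0"
    using assms(1,2) \<open>x \<noteq> 0\<close> unfolding pos_def_def by (simp_all add: inner_mulv)
  have "(1 - t) * quad T x x + t * quad S x x > 0"
  proof (cases "t = 1")
    case True then show ?thesis using a by simp
  next
    case False then show ?thesis using a assms(3,4)
      by (intro add_pos_nonneg) (simp_all)
  qed
  then show "0 < x \<bullet> ((T + t *\<^sub>R (S - T)) *v x)" using q by (simp add: inner_mulv)
qed

lemma mat_inner_lin: "mat_inner (T + t *\<^sub>R E) S = mat_inner T S + t * mat_inner E S"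
  by (simp add: mat_inner_alt algebra_simps sum.distrib sum_distrib_left)

lemma var_ineq:
  fixes T Ts :: "'p::finite sqmat" and w :: "real^'n::finite" and X :: "'n \<Rightarrow> real^'p"
  assumes opt: "tgl_local_opt h R lam X T w"
    and Ts: "pos_def Ts" "l1_norm Ts \<le> R" and lam: "0 \<le> lam"
  shows "mat_inner (matrix_inv T) (Ts - T)
           \<le> mat_inner (Ts - T) (wcov h X w) + lam * (l1_off_norm Ts - l1_off_norm T)"
proof -
  define E where "E = Ts - T"
  define S where "S = wcov h X w"
  define c where "c = mat_inner E S + lam * (l1_off_norm Ts - l1_off_norm T)"
  have feas: "tgl_feasible h R T w" using opt unfolding tgl_local_opt_def by blast
  then have Tpd: "pos_def T" and TR: "l1_norm T \<le> R" unfolding tgl_feasible_def by auto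
  obtain e where e: "e > 0" and loc: "\<And>Th w'. tgl_feasible h R Th w' \<and> dist (Th, w') (T, w) < e \<Longrightarrow>
      tgl_objective h lam X T w \<le> tgl_objective h lam X Th w'"
    using opt unfolding tgl_local_opt_def by blast
  define L where "L t = ln (det (T + t *\<^sub>R E))" for t
  have iT: "invertible T" by (rule pd_invertible[OF Tpd])
  have dpos: "det T > 0" by (rule det_pd_pos[OF Tpd])
  have DL: "(L has_field_derivative trace (matrix_inv T ** E)) (at 0)"
  proof -
    have "(L has_field_derivative inverse (det (T + 0 *\<^sub>R E)) * (det T * trace (matrix_inv T ** E))) (at 0)"
      unfolding L_def
      by (rule DERIV_chain2[OF DERIV_ln jacobi[OF iT]]) (simp add: dpos)
    moreover have "inverse (det T) * (det T * trace (matrix_inv T ** E)) = trace (matrix_inv T ** E)"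
      using dpos by (simp add: field_simps)
    ultimately show ?thesis by simp
  qed
  define b where "b = min 1 (e / (norm E + 1))"
  have nE: "norm E + 1 > 0" by (simp add: add_nonneg_pos)
  then have bpos: "b > 0" using e by (simp add: b_def)
  have bound: "(L t - L 0) / t \<le> c" if t: "0 < t" "t < b" for t
  proof -
    have t1: "t \<le> 1" using t by (simp add: b_def)
    have te: "t * norm E < e"
    proof -
      have "t * norm E \<le> t * (norm E + 1)" using t by simp
      also have "\<dots> < e / (norm E + 1) * (norm E + 1)"
        using t nE by (intro mult_strict_right_mono) (auto simp: b_def)
      also have "\<dots> = e" using nE by simp
      finally show ?thesis .
    qed
    define Th where "Th = T + t *\<^sub>R E"
    have pdTh: "pos_def Th" unfolding Th_def E_def using pd_convex[OF Tpd Ts(1)] t t1 by simp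
    have fTh: "tgl_feasible h R Th w"
      unfolding tgl_feasible_def
    proof (intro conjI)
      show "symmetric_mat Th" "pos_def Th" using pdTh unfolding pos_def_def by auto
      have "l1_norm Th \<le> (1 - t) * l1_norm T + t * l1_norm Ts"
        unfolding Th_def E_def using l1_convex[of t T Ts] t t1 by simp
      also have "\<dots> \<le> (1 - t) * R + t * R"
        using TR Ts(2) t t1 by (intro add_mono mult_left_mono) auto
      finally show "l1_norm Th \<le> R" by (simp add: algebra_simps)
    qed (use feas[unfolded tgl_feasible_def] in auto)
    have "dist (Th, w) (T, w) = norm (t *\<^sub>R E)"
      by (simp add: dist_Pair_Pair Th_def dist_norm)
    also have "\<dots> = t * norm E" using t by simp
    finally have "dist (Th, w) (T, w) < e" using te by simp
    then have le: "tgl_objective h lam X T w \<le> tgl_objective h lam X Th w" using loc fTh by blast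
    have offTh: "l1_off_norm Th \<le> (1 - t) * l1_off_norm T + t * l1_off_norm Ts"
      unfolding Th_def E_def using off_convex[of t T Ts] t t1 by simp
    have "L t - L 0 \<le> mat_inner Th S - mat_inner T S + lam * (l1_off_norm Th - l1_off_norm T)"
      using le unfolding tgl_objective_def L_def Th_def S_def by (simp add: algebra_simps)
    also have "\<dots> \<le> t * mat_inner E S + lam * (t * (l1_off_norm Ts - l1_off_norm T))"
      unfolding Th_def mat_inner_lin using offTh[unfolded Th_def] lam
      by (intro add_mono mult_left_mono) (auto simp: algebra_simps)
    also have "\<dots> = t * c" by (simp add: c_def algebra_simps)
    finally show ?thesis using t by (simp add: divide_le_eq mult.commute)
  qed
  have lim: "((\<lambda>t. (L t - L 0) / t) \<longlongrightarrow> trace (matrix_inv T ** E)) (at_right 0)"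
  proof -
    have "((\<lambda>t. (L (0 + t) - L 0) / t) \<longlongrightarrow> trace (matrix_inv T ** E)) (at 0)"
      using DL unfolding DERIV_def .
    then have "((\<lambda>t. (L t - L 0) / t) \<longlongrightarrow> trace (matrix_inv T ** E)) (at 0)" by simp
    then show ?thesis using tendsto_mono[OF at_le[OF subset_UNIV]] by blast
  qed
  have ev: "eventually (\<lambda>t. (L t - L 0) / t \<le> c) (at_right 0)"
    unfolding eventually_at_right_field using bpos bound by blast
  have "trace (matrix_inv T ** E) \<le> c"
    by (rule tendsto_upperbound[OF lim ev]) simp
  moreover have "transpose E = E"
    using pd_sym[OF Tpd] pd_sym[OF Ts(1)] sym_transpose unfolding E_def by (metis vector_minus_component)
  ultimately show ?thesis unfolding mat_inner_def c_def E_def S_def by simp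
qed


lemma mi_diff_l: "mat_inner (A - B) C = mat_inner A C - mat_inner B C"
  by (simp add: mat_inner_alt algebra_simps sum_subtractf)
lemma mi_diff_r: "mat_inner C (A - B) = mat_inner C A - mat_inner C B"
  by (simp add: mat_inner_alt algebra_simps sum_subtractf)
lemma mi_add_r: "mat_inner C (A + B) = mat_inner C A + mat_inner C B"
  by (simp add: mat_inner_alt algebra_simps sum.distrib)
lemma mi_comm: "mat_inner A B = mat_inner B A"
  by (simp add: mat_inner_alt mult.commute)
lemma mi_scale_r: "mat_inner A (t *\<^sub>R B) = t * mat_inner A B"
  by (simp add: mat_inner_alt sum_distrib_left mult_ac)
lemma l1_nonneg: "0 \<le> l1_norm A" by (simp add: l1_norm_def sum_nonneg)
lemma off_nonneg: "0 \<le> l1_off_norm A" by (simp add: l1_off_norm_def sum_nonneg)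
lemma off_le_l1: "l1_off_norm A \<le> l1_norm A"
  unfolding l1_off_norm_def l1_norm_def by (intro sum_mono) auto
lemma l1_diff: "l1_norm (A - B) \<le> l1_norm A + l1_norm B"
  unfolding l1_norm_def sum.distrib[symmetric] by (intro sum_mono) (simp add: abs_triangle_ineq4)
lemma frob_nonneg: "0 \<le> frob_norm A" by (simp add: frob_norm_def sum_nonneg)
lemma frob_sq: "(frob_norm A)^2 = (\<Sum>i\<in>UNIV. \<Sum>j\<in>UNIV. (A$i$j)^2)"
  by (simp add: frob_norm_def sum_nonneg)
lemma pair_sum: "(\<Sum>i\<in>UNIV. \<Sum>j\<in>UNIV. f i j) = (\<Sum>x\<in>UNIV. f (fst x) (snd x))"
  by (simp add: sum.cartesian_product split_beta)
lemma wcov_add: "wcov h X (a + b) = wcov h X a + wcov h X b"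
  by (simp add: wcov_def sum.distrib scaleR_add_left scaleR_add_right)

lemma linf_ge: "\<bar>U$i$j\<bar> \<le> linf_norm (U::'p::finite sqmat)"
proof -
  have fin: "finite {\<bar>U$i$j\<bar> | i j. True}"
  proof -
    have "{\<bar>U$i$j\<bar> | i j. True} = (\<lambda>(i,j). \<bar>U$i$j\<bar>) ` UNIV" by auto
    then show ?thesis by simp
  qed
  show ?thesis unfolding linf_norm_def by (rule Max_ge[OF fin]) blast
qed

lemma mi_bound: "\<bar>mat_inner U V\<bar> \<le> linf_norm U * l1_norm (V::'p::finite sqmat)"
proof -
  have "\<bar>mat_inner U V\<bar> \<le> (\<Sum>i\<in>UNIV. \<bar>\<Sum>j\<in>UNIV. U$i$j * V$i$j\<bar>)"
    unfolding mat_inner_alt by (rule sum_abs)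
  also have "\<dots> \<le> (\<Sum>i\<in>UNIV. \<Sum>j\<in>UNIV. \<bar>U$i$j * V$i$j\<bar>)"
    by (intro sum_mono sum_abs)
  also have "\<dots> \<le> (\<Sum>i\<in>UNIV. \<Sum>j\<in>UNIV. linf_norm U * \<bar>V$i$j\<bar>)"
    by (intro sum_mono) (simp add: abs_mult mult_right_mono linf_ge)
  also have "\<dots> = linf_norm U * l1_norm V" by (simp add: l1_norm_def sum_distrib_left)
  finally show ?thesis .
qed

lemma frob_scale: "frob_norm (t *\<^sub>R A) = \<bar>t\<bar> * frob_norm A"
proof -
  have "(\<Sum>i\<in>UNIV. \<Sum>j\<in>UNIV. ((t *\<^sub>R A)$i$j)^2) = t^2 * (\<Sum>i\<in>UNIV. \<Sum>j\<in>UNIV. (A$i$j)^2)"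
    by (simp add: power_mult_distrib sum_distrib_left)
  then show ?thesis by (simp add: frob_norm_def real_sqrt_mult)
qed


lemma final_alg:
  fixes kappa lam tau1 s f a b off :: real
  assumes k: "kappa > 0" and l: "lam > 0" and t: "tau1 \<ge> 0" and s: "s \<ge> 0" and f: "f \<ge> 0"
    and a: "a \<ge> 0" and b: "b \<ge> 0"
    and h1: "kappa * f^2 \<le> lam * (a - b) + (lam / 2) * (a + b) + tau1 * f"
    and h2: "a \<le> s * f" and h3: "off \<le> a + b"
  shows "f \<le> (1 / kappa) * (3 * lam * s / 2 + tau1)
         \<and> off \<le> (2 / (lam * kappa)) * (3 * lam * s + tau1)^2"
proof -
  have h1': "kappa * f^2 \<le> (3 * lam / 2) * a - (lam / 2) * b + tau1 * f"
  proof -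
    have "lam * (a - b) + (lam / 2) * (a + b) = (3 * lam / 2) * a - (lam / 2) * b"
      by (simp add: algebra_simps)
    then show ?thesis using h1 by linarith
  qed
  have "(3 * lam / 2) * a \<le> (3 * lam / 2) * (s * f)" using h2 l by simp
  moreover have "0 \<le> (lam / 2) * b" using l b by simp
  moreover have "(3 * lam / 2) * (s * f) + tau1 * f = (3 * lam * s / 2 + tau1) * f"
    by (simp add: algebra_simps)
  moreover have "kappa * f * f = kappa * f^2" by (simp add: power2_eq_square)
  ultimately have c1: "kappa * f * f \<le> (3 * lam * s / 2 + tau1) * f"
    using h1' by linarith
  have F: "f \<le> (3 * lam * s / 2 + tau1) / kappa"
  proof (cases "f = 0")
    case True then show ?thesis using k l s t by simp
  next
    case False
    then have "f > 0" using f by simp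
    then have "kappa * f \<le> 3 * lam * s / 2 + tau1" using c1 by simp
    then show ?thesis using k by (simp add: field_simps)
  qed
  have "0 \<le> kappa * f^2" using k by simp
  then have "(lam / 2) * b \<le> (3 * lam / 2) * a + tau1 * f" using h1' by linarith
  then have "b \<le> 3 * a + 2 * tau1 * f / lam" using l by (simp add: field_simps)
  then have "off \<le> 4 * a + 2 * tau1 * f / lam" using h3 by linarith
  also have "\<dots> \<le> (4 * s + 2 * tau1 / lam) * f"
    using h2 by (simp add: algebra_simps)
  also have "\<dots> \<le> (4 * s + 2 * tau1 / lam) * ((3 * lam * s / 2 + tau1) / kappa)"
    using F s t l by (intro mult_left_mono) auto
  also have "\<dots> = (2 / (lam * kappa)) * ((2 * lam * s + tau1) * (3 * lam * s / 2 + tau1))"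
    using l k by (simp add: field_simps)
  also have "\<dots> \<le> (2 / (lam * kappa)) * (3 * lam * s + tau1)^2"
  proof (intro mult_left_mono)
    have "0 \<le> lam * s * tau1" using l s t by simp
    moreover have "0 \<le> (lam * s)^2" by simp
    ultimately show "(2 * lam * s + tau1) * (3 * lam * s / 2 + tau1) \<le> (3 * lam * s + tau1)^2"
      by (simp add: algebra_simps power2_eq_square)
  qed (use l k in simp)
  finally show ?thesis using F by simp
qed



lemma decomp:
  fixes T Ts :: "'p::finite sqmat" and k :: nat
  assumes sparse: "card {(i, j). i \<noteq> j \<and> Ts$i$j \<noteq> 0} \<le> k"
  shows "\<exists>a b. 0 \<le> a \<and> 0 \<le> b \<and> l1_norm (T - Ts) = a + b
      \<and> l1_off_norm Ts - l1_off_norm T \<le> a - b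
      \<and> a \<le> sqrt (real k + real CARD('p)) * frob_norm (T - Ts)"
proof -
  define D where "D = T - Ts"
  define g where "g x = \<bar>D $ fst x $ snd x\<bar>" for x :: "'p \<times> 'p"
  define S where "S = {x :: 'p \<times> 'p. fst x = snd x \<or> Ts $ fst x $ snd x \<noteq> 0}"
  define a where "a = sum g S"
  define b where "b = sum g (UNIV - S)"
  have a0: "0 \<le> a" and b0: "0 \<le> b" unfolding a_def b_def g_def by (auto intro: sum_nonneg)
  have l1: "l1_norm D = a + b"
  proof -
    have "l1_norm D = sum g UNIV" unfolding l1_norm_def g_def by (rule pair_sum)
    also have "\<dots> = sum g (UNIV - S) + sum g S" by (rule sum.subset_diff) auto
    finally show ?thesis by (simp add: a_def b_def)
  qed
  have off: "l1_off_norm Ts - l1_off_norm T \<le> a - b"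
  proof -
    define offv where "offv (Mx::'p sqmat) (x::'p \<times> 'p) = (if fst x \<noteq> snd x then \<bar>Mx $ fst x $ snd x\<bar> else 0)" for Mx x
    have "l1_off_norm Ts - l1_off_norm T = (\<Sum>x\<in>UNIV. offv Ts x - offv T x)"
      unfolding l1_off_norm_def offv_def pair_sum[of "\<lambda>i j. if i \<noteq> j then \<bar>_ $ i $ j\<bar> else 0"]
      by (simp add: sum_subtractf)
    also have "\<dots> \<le> (\<Sum>x\<in>UNIV. (if x \<in> S then g x else 0) - (if x \<in> UNIV - S then g x else 0))"
    proof (intro sum_mono)
      fix x :: "'p \<times> 'p"
      show "offv Ts x - offv T x \<le> (if x \<in> S then g x else 0) - (if x \<in> UNIV - S then g x else 0)"
        unfolding offv_def g_def S_def D_def by (auto simp: abs_triangle_ineq3)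
    qed
    also have "\<dots> = a - b"
      unfolding sum_subtractf sum.inter_restrict[OF finite, symmetric] a_def b_def by simp
    finally show ?thesis .
  qed
  have cardS: "card S \<le> k + CARD('p)"
  proof -
    have "S = {(i, j). i \<noteq> j \<and> Ts$i$j \<noteq> 0} \<union> (\<lambda>i. (i, i)) ` UNIV" unfolding S_def by auto
    then have "card S \<le> card {(i, j). i \<noteq> j \<and> Ts$i$j \<noteq> 0} + card ((\<lambda>i. (i, i)) ` (UNIV :: 'p set))"
      by (simp add: card_Un_le)
    also have "card ((\<lambda>i. (i, i)) ` (UNIV :: 'p set)) = CARD('p)"
      by (rule card_image) (auto simp: inj_on_def)
    finally show ?thesis using sparse by simp
  qed
  have fsq: "(frob_norm D)^2 = (\<Sum>x\<in>UNIV. (g x)^2)"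
    unfolding frob_sq g_def by (simp add: pair_sum[of "\<lambda>i j. (D $ i $ j)^2"])
  have "a^2 \<le> (\<Sum>x\<in>S. (g x)^2) * card S" unfolding a_def by (rule sum_squared_le_sum_of_squares)
  also have "\<dots> \<le> (frob_norm D)^2 * (real k + real CARD('p))"
  proof (intro mult_mono)
    show "(\<Sum>x\<in>S. (g x)^2) \<le> (frob_norm D)^2" unfolding fsq by (intro sum_mono2) auto
    show "real (card S) \<le> real k + real CARD('p)" using cardS by linarith
  qed (auto intro: sum_nonneg)
  finally have "a^2 \<le> (real k + real CARD('p)) * (frob_norm D)^2" by (simp add: mult.commute)
  then have "sqrt (a^2) \<le> sqrt ((real k + real CARD('p)) * (frob_norm D)^2)" by (rule real_sqrt_le_mono)
  then have "a \<le> sqrt (real k + real CARD('p)) * frob_norm D"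
    using a0 frob_nonneg[of D] by (simp add: real_sqrt_mult)
  then show ?thesis using a0 b0 l1 off unfolding D_def by blast
qed



lemma mi_neg_l: "mat_inner (- A) B = - mat_inner A B"
  by (simp add: mat_inner_alt sum_negf)

theorem theorem1:
  fixes X :: "'n::finite \<Rightarrow> real^'p::finite"
    and G B :: "'n set"
    and ThetaS ThetaT :: "real^'p^'p"
    and wT :: "real^'n"
    and k :: nat
    and R lam kappa :: real
    and tau1 tau2 :: "nat \<Rightarrow> nat \<Rightarrow> real"
  assumes p2: "CARD('p) \<ge> 2"
    and partition: "G \<union> B = UNIV" "G \<inter> B = {}"
    and G_ne: "G \<noteq> {}"
    and ThetaS_pd: "pos_def ThetaS"
    and ThetaS_sparse: "card {(i, j). i \<noteq> j \<and> ThetaS$i$j \<noteq> 0} \<le> k"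
    and R_pos: "R > 0" and ThetaS_R: "l1_norm ThetaS \<le> R"
    and lam_pos: "lam > 0"
    and opt: "tgl_local_opt (real (card G)) R lam X ThetaT wT"
    and kappa_pos: "kappa > 0"
    and rsc: "\<forall>D :: real^'p^'p. frob_norm D \<le> 1 \<and> pos_def (ThetaS + D) \<longrightarrow>
               mat_inner (matrix_inv ThetaS - matrix_inv (ThetaS + D)) D \<ge> kappa * (frob_norm D)\<^sup>2"
    and tau_nonneg: "tau1 CARD('n) CARD('p) \<ge> 0" "tau2 CARD('n) CARD('p) \<ge> 0"
    and incoh: "\<bar>mat_inner (wcov (real (card G)) X (wT - (\<chi> i. if i \<in> G then wT$i else 0)))
                          (ThetaT - ThetaS)\<bar>
               \<le> tau1 CARD('n) CARD('p) * frob_norm (ThetaT - ThetaS)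
                 + tau2 CARD('n) CARD('p) * l1_norm (ThetaT - ThetaS)"
    and lam_lower: "4 * max (linf_norm (wcov (real (card G)) X (\<chi> i. if i \<in> G then wT$i else 0)
                                          - matrix_inv ThetaS))
                         (tau2 CARD('n) CARD('p)) \<le> lam"
    and lam_upper: "lam \<le> (kappa - tau1 CARD('n) CARD('p)) / (3 * R)"
  shows "(frob_norm (ThetaT - ThetaS)
           \<le> (1 / kappa) * (3 * lam * sqrt (real k + real CARD('p)) / 2 + tau1 CARD('n) CARD('p)))
         \<and> (l1_off_norm (ThetaT - ThetaS)
           \<le> (2 / (lam * kappa)) * (3 * lam * sqrt (real k + real CARD('p)) + tau1 CARD('n) CARD('p))\<^sup>2)"
proof -
  define h where "h = real (card G)"
  define ws :: "real^'n" where "ws = (\<chi> i. if i \<in> G then wT$i else 0)"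
  define Gm where "Gm = wT - ws"
  define D where "D = ThetaT - ThetaS"
  define t1 where "t1 = tau1 CARD('n) CARD('p)"
  define t2 where "t2 = tau2 CARD('n) CARD('p)"
  define f where "f = frob_norm D"
  have opt': "tgl_local_opt h R lam X ThetaT wT" using opt by (simp add: h_def)
  have feas: "tgl_feasible h R ThetaT wT" using opt' unfolding tgl_local_opt_def by blast
  then have Tpd: "pos_def ThetaT" and TR: "l1_norm ThetaT \<le> R" unfolding tgl_feasible_def by auto
  have VI: "mat_inner (matrix_inv ThetaT) (ThetaS - ThetaT)
           \<le> mat_inner (ThetaS - ThetaT) (wcov h X wT) + lam * (l1_off_norm ThetaS - l1_off_norm ThetaT)"
    using var_ineq[OF opt' ThetaS_pd ThetaS_R] lam_pos by simp
  have negD: "ThetaS - ThetaT = - D" by (simp add: D_def)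
  have wsplit: "wcov h X wT = wcov h X ws + wcov h X Gm"
    unfolding wcov_add[symmetric] Gm_def by simp
  define Q where "Q = mat_inner (matrix_inv ThetaS - matrix_inv ThetaT) D"
  have lmax: "4 * max (linf_norm (wcov h X ws - matrix_inv ThetaS)) t2 \<le> lam"
    using lam_lower by (simp add: h_def ws_def t2_def)
  have lin: "linf_norm (wcov h X ws - matrix_inv ThetaS) \<le> lam / 4" and t2l: "t2 \<le> lam / 4"
    using lmax by auto
  have l1D: "0 \<le> l1_norm D" by (rule l1_nonneg)
  have f0: "0 \<le> f" unfolding f_def by (rule frob_nonneg)
  have bz: "\<bar>mat_inner (wcov h X ws - matrix_inv ThetaS) D\<bar> \<le> lam / 4 * l1_norm D"
    using mi_bound[of "wcov h X ws - matrix_inv ThetaS" D] mult_right_mono[OF lin l1D] by linarith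
  have inc: "\<bar>mat_inner (wcov h X Gm) D\<bar> \<le> t1 * f + t2 * l1_norm D"
    using incoh by (simp add: h_def ws_def Gm_def D_def t1_def t2_def f_def)
  have t2b: "t2 * l1_norm D \<le> lam / 4 * l1_norm D" using mult_right_mono[OF t2l l1D] .
  have Qb: "Q \<le> lam * (l1_off_norm ThetaS - l1_off_norm ThetaT) + (lam / 2) * l1_norm D + t1 * f"
  proof -
    have e1: "mat_inner (matrix_inv ThetaT) (ThetaS - ThetaT) = - mat_inner (matrix_inv ThetaT) D"
      unfolding negD mi_comm[of _ "- D"] mi_neg_l by (simp add: mi_comm)
    have e2: "mat_inner (ThetaS - ThetaT) (wcov h X wT)
        = - (mat_inner (wcov h X ws) D + mat_inner (wcov h X Gm) D)"
      unfolding negD wsplit mi_neg_l mi_add_r by (simp add: mi_comm)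
    have e3: "Q = mat_inner (matrix_inv ThetaS) D - mat_inner (matrix_inv ThetaT) D"
      unfolding Q_def mi_diff_l ..
    have e4: "mat_inner (wcov h X ws - matrix_inv ThetaS) D
        = mat_inner (wcov h X ws) D - mat_inner (matrix_inv ThetaS) D"
      by (rule mi_diff_l)
    show ?thesis using VI e1 e2 e3 e4 bz inc t2b by linarith
  qed
  have offTs: "l1_off_norm ThetaS - l1_off_norm ThetaT \<le> R"
    using off_le_l1[of ThetaS] off_nonneg[of ThetaT] ThetaS_R by linarith
  have l1R: "l1_norm D \<le> 2 * R" using l1_diff[of ThetaT ThetaS] TR ThetaS_R by (simp add: D_def)
  have kt: "lam * (3 * R) \<le> kappa - t1"
    using lam_upper R_pos by (simp add: t1_def pos_le_divide_eq)
  show ?thesis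
  proof (cases "f \<le> 1")
    case True
    have TD: "ThetaS + D = ThetaT" by (simp add: D_def)
    have "pos_def (ThetaS + D)" using Tpd TD by simp
    then have "mat_inner (matrix_inv ThetaS - matrix_inv (ThetaS + D)) D \<ge> kappa * f^2"
      using rsc True unfolding f_def by blast
    then have QK: "Q \<ge> kappa * f^2" unfolding Q_def TD .
    obtain a b where ab: "0 \<le> a" "0 \<le> b" "l1_norm D = a + b"
      "l1_off_norm ThetaS - l1_off_norm ThetaT \<le> a - b"
      "a \<le> sqrt (real k + real CARD('p)) * f"
      using decomp[OF ThetaS_sparse, of ThetaT] unfolding D_def f_def by blast
    have "lam * (l1_off_norm ThetaS - l1_off_norm ThetaT) \<le> lam * (a - b)"
      using ab(4) lam_pos by simp
    then have h1: "kappa * f^2 \<le> lam * (a - b) + (lam / 2) * (a + b) + t1 * f"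
      using QK Qb ab(3) by (simp only: ab(3))
    have h3: "l1_off_norm D \<le> a + b" using off_le_l1[of D] ab(3) by simp
    have "f \<le> (1 / kappa) * (3 * lam * sqrt (real k + real CARD('p)) / 2 + t1)
         \<and> l1_off_norm D \<le> (2 / (lam * kappa)) * (3 * lam * sqrt (real k + real CARD('p)) + t1)^2"
      by (rule final_alg[OF kappa_pos lam_pos _ _ f0 ab(1) ab(2) h1 ab(5) h3])
        (auto simp: t1_def tau_nonneg)
    then show ?thesis unfolding f_def D_def t1_def .
  next
    case False
    then have f1: "f > 1" by simp
    define tt where "tt = 1 / f"
    have tt: "0 < tt" "tt < 1" using f1 by (auto simp: tt_def)
    define A1 where "A1 = ThetaS + tt *\<^sub>R D"
    have A1pd: "pos_def A1" unfolding A1_def D_def using pd_convex[OF ThetaS_pd Tpd] tt by simp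
    have fr: "frob_norm (tt *\<^sub>R D) = 1" using tt f1 by (simp add: frob_scale tt_def f_def[symmetric])
    have "mat_inner (matrix_inv ThetaS - matrix_inv (ThetaS + tt *\<^sub>R D)) (tt *\<^sub>R D) \<ge> kappa * 1^2"
      using rsc fr A1pd unfolding A1_def by (metis order_refl)
    then have r1: "tt * mat_inner (matrix_inv ThetaS - matrix_inv A1) D \<ge> kappa"
      by (simp add: mi_scale_r A1_def)
    have X1: "mat_inner (matrix_inv ThetaS - matrix_inv A1) D \<ge> kappa * f"
    proof -
      have "f * (tt * mat_inner (matrix_inv ThetaS - matrix_inv A1) D) \<ge> f * kappa"
        using r1 f1 by (intro mult_left_mono) auto
      then show ?thesis using f1 by (simp add: tt_def mult.commute)
    qed
    have "ThetaT - A1 = (1 - tt) *\<^sub>R D" by (simp add: A1_def D_def algebra_simps)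
    then have "0 \<le> (1 - tt) * mat_inner (matrix_inv A1 - matrix_inv ThetaT) D"
      using mono_inv[OF A1pd Tpd] by (simp add: mi_scale_r)
    then have X2: "0 \<le> mat_inner (matrix_inv A1 - matrix_inv ThetaT) D"
      using tt by (simp add: zero_le_mult_iff)
    have "Q = mat_inner (matrix_inv ThetaS - matrix_inv A1) D + mat_inner (matrix_inv A1 - matrix_inv ThetaT) D"
      unfolding Q_def mi_diff_l by simp
    then have "kappa * f \<le> Q" using X1 X2 by linarith
    moreover have "(lam / 2) * l1_norm D \<le> (lam / 2) * (2 * R)" using l1R lam_pos by simp
    moreover have "lam * (l1_off_norm ThetaS - l1_off_norm ThetaT) \<le> lam * R" using offTs lam_pos by simp
    ultimately have "kappa * f \<le> 2 * lam * R + t1 * f" using Qb by linarith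
    then have c: "(kappa - t1) * f \<le> 2 * lam * R" by (simp add: algebra_simps)
    have pos: "kappa - t1 > 0" using kt lam_pos R_pos by (smt (verit) mult_pos_pos)
    have "(kappa - t1) * 1 < (kappa - t1) * f" using pos f1 by (intro mult_strict_left_mono) auto
    then have c2: "kappa - t1 < (kappa - t1) * f" by simp
    have c3: "2 * lam * R < lam * (3 * R)" using lam_pos R_pos by simp
    have False using c c2 c3 kt by linarith
    then show ?thesis ..
  qed
qed


end
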